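(* Let $\bar\alpha\in[0,1]$ and $n\ge1$, and let $\boldsymbol{\alpha}^*=(\alpha^*_1,\dots,\alpha^*_n)$ be a maximizer of $$\max_{\boldsymbol{\alpha}\in[0,1]^n} C(\boldsymbol{\alpha})\quad\text{subject to}\quad G(\boldsymbol{\alpha})=0,$$ with its entries ordered so that $\alpha^*_1\ge\alpha^*_2\ge\dots\ge\alpha^*_n$. Let $m=\max\{i:\alpha^*_i=1\}$, with $m=0$ if no entry equals $1$. Then $$m=\left\lfloor \frac{\bar\alpha\, n\,(k_1-k_2)}{k_1-\bar\alpha k_2}\right\rfloor .$$
   Context: Model of a road with $n\ge1$ parallel lanes of common length $d>0$. Vehicles have length $L>0$. A vehicle keeps a headway (space gap) $\bar h$ to the vehicle in front of it if both it and the vehicle in front are autonomous, and headway $h$ otherwise, where $0\le \bar h<h$. Vehicle types within a lane are i.i.d. Bernoulli: each vehicle in lane $i$ is autonomous with probability $\alpha_i\in[0,1]$ (the lane's autonomy level). Set $k_1=(L+h)/d$ and $k_2=(h-\bar h)/d$, so $k_1>k_2>0$ and $k_1-k_2=(L+\bar h)/d>0$. The capacity of a lane with autonomy level $\alpha\in[0,1]$ is $$c(\alpha)=\frac{1}{k_1-k_2\alpha^2}=\frac{d}{L+h-(h-\bar h)\alpha^2}.$$ Let $\bar\alpha\in[0,1]$ be the overall fraction of autonomous vehicles on the road. For $\boldsymbol{\alpha}=(\alpha_1,\dots,\alpha_n)\in[0,1]^n$ define $C(\boldsymbol{\alpha})=\sum_{i=1}^n c(\alpha_i)$ (total capacity)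 and $G(\boldsymbol{\alpha})=\sum_{i=1}^n(\alpha_i-\bar\alpha)c(\alpha_i)$; the constraint $G(\boldsymbol{\alpha})=0$ expresses that the overall autonomy level equals $\bar\alpha$. *)

theory Defs
  imports Complex_Main
begin

text \<open>Road model: lane length d, vehicle length L, headways h (default) and hb (autonomous pair).
  Lanes are indexed by 1..n; a configuration is a function alpha :: nat => real.\<close>

definition k1 :: "real \<Rightarrow> real \<Rightarrow> real \<Rightarrow> real" where
  "k1 d L h = (L + h) / d"

definition k2 :: "real \<Rightarrow> real \<Rightarrow> real \<Rightarrow> real" where
  "k2 d h hb = (h - hb) / d"

definition cap :: "real \<Rightarrow> real \<Rightarrow> real \<Rightarrow> real \<Rightarrow> real \<Rightarrow> real" where
  "cap d L h hb a = 1 / (k1 d L h - k2 d h hb * a\<^sup>2)"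

definition totcap :: "real \<Rightarrow> real \<Rightarrow> real \<Rightarrow> real \<Rightarrow> nat \<Rightarrow> (nat \<Rightarrow> real) \<Rightarrow> real" where
  "totcap d L h hb n alpha = (\<Sum>i=1..n. cap d L h hb (alpha i))"

definition Gcon :: "real \<Rightarrow> real \<Rightarrow> real \<Rightarrow> real \<Rightarrow> real \<Rightarrow> nat \<Rightarrow> (nat \<Rightarrow> real) \<Rightarrow> real" where
  "Gcon d L h hb abar n alpha = (\<Sum>i=1..n. (alpha i - abar) * cap d L h hb (alpha i))"

definition feasible :: "real \<Rightarrow> real \<Rightarrow> real \<Rightarrow> real \<Rightarrow> real \<Rightarrow> nat \<Rightarrow> (nat \<Rightarrow> real) \<Rightarrow> bool" where
  "feasible d L h hb abar n alpha \<longleftrightarrow>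
     (\<forall>i\<in>{1..n}. 0 \<le> alpha i \<and> alpha i \<le> 1) \<and> Gcon d L h hb abar n alpha = 0"

definition num_full :: "nat \<Rightarrow> (nat \<Rightarrow> real) \<Rightarrow> nat" where
  "num_full n alpha = (if \<exists>i\<in>{1..n}. alpha i = 1 then Max {i\<in>{1..n}. alpha i = 1} else 0)"

end

theory Submission
  imports Defs
begin


definition cf :: "real \<Rightarrow> real \<Rightarrow> real \<Rightarrow> real" where "cf K1 K2 a = 1/(K1 - K2*a^2)"
definition yf :: "real \<Rightarrow> real \<Rightarrow> real \<Rightarrow> real \<Rightarrow> real" where "yf K1 K2 A a = (a - A) * cf K1 K2 a"
definition Dd :: "real \<Rightarrow> real \<Rightarrow> real \<Rightarrow> real \<Rightarrow> real \<Rightarrow> real" where "Dd K1 K2 A p q = K1 + K2*p*q - A*K2*(p+q)"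
definition Sl :: "real \<Rightarrow> real \<Rightarrow> real \<Rightarrow> real \<Rightarrow> real \<Rightarrow> real" where "Sl K1 K2 A p q = K2*(p+q)/Dd K1 K2 A p q"

lemma den_pos: fixes K1 K2 a :: real assumes "0<K2" "K2<K1" "0\<le>a" "a\<le>1" shows "K1 - K2*a^2 > 0"
proof -
  have "a^2 \<le> 1" using assms power_le_one[of a 2] by simp
  hence "K2*a^2 \<le> K2" using assms by (simp add: mult_left_le)
  thus ?thesis using assms by linarith
qed

lemma Dd_pos: assumes "0<K2" "K2<K1" "0\<le>A" "A\<le>1" "0\<le>p" "p\<le>1" "0\<le>q" "q\<le>1"
  shows "Dd K1 K2 A p q > 0"
proof -
  have "(1-p)*(1-q) \<ge> 0" using assms by simp
  moreover have "A*(p+q) \<le> p+q" using assms mult_left_le_one_le[of "p+q" A] by simp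
  moreover have "(1-p)*(1-q) = 1 - p - q + p*q" by (simp add: algebra_simps)
  ultimately have "p*q - A*(p+q) \<ge> -1" by linarith
  hence "K2*(p*q - A*(p+q)) \<ge> -K2" using assms
    by (metis mult.right_neutral mult_minus_right mult_left_mono less_imp_le)
  thus ?thesis unfolding Dd_def using assms by (simp add: algebra_simps)
qed

lemma y_diff: assumes "0<K2" "K2<K1" "0\<le>p" "p\<le>1" "0\<le>q" "q\<le>1"
  shows "yf K1 K2 A q - yf K1 K2 A p = (q-p) * Dd K1 K2 A p q * cf K1 K2 p * cf K1 K2 q"
proof -
  have a: "K1 - K2*p^2 > 0" "K1 - K2*q^2 > 0" using den_pos[of K2 K1 p] den_pos[of K2 K1 q] assms by auto
  show ?thesis unfolding yf_def cf_def Dd_def using a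
    by (simp add: field_simps) (simp add: algebra_simps power2_eq_square)
qed

lemma c_diff: assumes "0<K2" "K2<K1" "0\<le>A" "A\<le>1" "0\<le>p" "p\<le>1" "0\<le>q" "q\<le>1"
  shows "cf K1 K2 q - cf K1 K2 p = Sl K1 K2 A p q * (yf K1 K2 A q - yf K1 K2 A p)"
proof -
  have a: "K1 - K2*p^2 > 0" "K1 - K2*q^2 > 0" using den_pos[of K2 K1 p] den_pos[of K2 K1 q] assms by auto
  have d: "Dd K1 K2 A p q > 0" using Dd_pos assms by auto
  have "Sl K1 K2 A p q * (yf K1 K2 A q - yf K1 K2 A p) = K2*(p+q)*(q-p)*cf K1 K2 p * cf K1 K2 q"
    unfolding y_diff[OF assms(1,2,5-8)] Sl_def using d by simp
  also have "\<dots> = cf K1 K2 q - cf K1 K2 p" unfolding cf_def using a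
    by (simp add: field_simps) (simp add: algebra_simps power2_eq_square)
  finally show ?thesis by simp
qed

lemma Sl_sym: "Sl K1 K2 A p q = Sl K1 K2 A q p"
  unfolding Sl_def Dd_def by (simp add: algebra_simps)

lemma Sl_mono: assumes "0<K2" "K2<K1" "0\<le>A" "A\<le>1" "0\<le>p" "p\<le>1" "0\<le>q" "q<q'" "q'\<le>1"
  shows "Sl K1 K2 A p q < Sl K1 K2 A p q'"
proof -
  have d1: "Dd K1 K2 A p q > 0" and d2: "Dd K1 K2 A p q' > 0" using Dd_pos assms by auto
  have key: "(p+q')*Dd K1 K2 A p q - (p+q)*Dd K1 K2 A p q' = (q'-q)*(K1 - K2*p^2)"
    unfolding Dd_def by (simp add: algebra_simps power2_eq_square)
  have "(q'-q)*(K1 - K2*p^2) > 0" using den_pos[of K2 K1 p] assms by simp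
  hence "(p+q)*Dd K1 K2 A p q' < (p+q')*Dd K1 K2 A p q" using key by linarith
  hence "K2*((p+q)*Dd K1 K2 A p q') < K2*((p+q')*Dd K1 K2 A p q)" using assms by simp
  thus ?thesis unfolding Sl_def using d1 d2 by (simp add: divide_simps algebra_simps)
qed

lemma y_mono: assumes "0<K2" "K2<K1" "0\<le>A" "A\<le>1" "0\<le>p" "p<q" "q\<le>1"
  shows "yf K1 K2 A p < yf K1 K2 A q"
proof -
  have "(q-p) * Dd K1 K2 A p q * cf K1 K2 p * cf K1 K2 q > 0"
    using Dd_pos[of K2 K1 A p q] den_pos[of K2 K1 p] den_pos[of K2 K1 q] assms
    by (simp add: cf_def)
  thus ?thesis using y_diff[of K2 K1 p q A] assms by simp
qed

lemma y_cont: assumes "0<K2" "K2<K1" shows "continuous_on {0..1} (yf K1 K2 A)"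
proof -
  have "continuous_on {0..1} (\<lambda>a. (a - A) * (1/(K1 - K2*a^2)))"
    by (intro continuous_intros) (use den_pos[OF assms] in force)
  thus ?thesis unfolding yf_def cf_def .
qed


lemma sum_upd2:
  fixes g :: "'a \<Rightarrow> real"
  assumes "finite S" "i \<in> S" "j \<in> S" "i \<noteq> j"
  shows "(\<Sum>k\<in>S. g ((f(i:=u, j:=v)) k)) = (\<Sum>k\<in>S. g (f k)) - g (f i) - g (f j) + g u + g v"
proof -
  have gen: "\<And>hh. sum hh S = hh i + hh j + sum hh (S-{i}-{j})"
    using assms by (metis (no_types, lifting) DiffI finite_Diff insert_iff singletonD sum.remove add.assoc)
  have "sum (\<lambda>k. g ((f(i:=u, j:=v)) k)) (S-{i}-{j}) = sum (\<lambda>k. g (f k)) (S-{i}-{j})"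
    by (rule sum.cong) auto
  thus ?thesis using gen[of "\<lambda>k. g ((f(i:=u, j:=v)) k)"] gen[of "\<lambda>k. g (f k)"] assms(4) by simp
qed

lemma y_le: assumes "0<K2" "K2<K1" "0\<le>A" "A\<le>1" "0\<le>p" "p\<le>q" "q\<le>1"
  shows "yf K1 K2 A p \<le> yf K1 K2 A q"
  using y_mono[of K2 K1 A p q] assms by (cases "p = q") auto

theorem theorem2:
  fixes d L h hb abar :: real and n :: nat and astar :: "nat \<Rightarrow> real"
  assumes "d > 0" and "L > 0" and "0 \<le> hb" and "hb < h"
    and "0 \<le> abar" and "abar \<le> 1"
    and "n \<ge> 1"
    and "feasible d L h hb abar n astar"
    and "\<forall>beta. feasible d L h hb abar n beta \<longrightarrow>
           totcap d L h hb n beta \<le> totcap d L h hb n astar"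
    and "\<forall>i j. 1 \<le> i \<and> i \<le> j \<and> j \<le> n \<longrightarrow> astar j \<le> astar i"
  shows "int (num_full n astar) =
    \<lfloor>abar * real n * (k1 d L h - k2 d h hb) / (k1 d L h - abar * k2 d h hb)\<rfloor>"
proof -
  define K1 where "K1 = k1 d L h"
  define K2 where "K2 = k2 d h hb"
  have K2p: "0 < K2" unfolding K2_def k2_def using assms by simp
  have K21: "K2 < K1" unfolding K2_def K1_def k1_def k2_def using assms by (simp add: divide_strict_right_mono)
  note A0 = assms(5) and A1 = assms(6)
  have capeq: "cap d L h hb = cf K1 K2" unfolding cap_def cf_def K1_def K2_def by auto
  have tot: "\<And>beta. totcap d L h hb n beta = (\<Sum>k=1..n. cf K1 K2 (beta k))"
    unfolding totcap_def capeq ..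
  have Gc: "\<And>beta. Gcon d L h hb abar n beta = (\<Sum>k=1..n. yf K1 K2 abar (beta k))"
    unfolding Gcon_def capeq yf_def ..
  have rng: "\<And>k. k \<in> {1..n} \<Longrightarrow> 0 \<le> astar k \<and> astar k \<le> 1"
    using assms(8) unfolding feasible_def by auto
  have G0: "(\<Sum>k=1..n. yf K1 K2 abar (astar k)) = 0"
    using assms(8) unfolding feasible_def Gc by auto
  have opt: "\<And>beta. (\<forall>k\<in>{1..n}. 0 \<le> beta k \<and> beta k \<le> 1) \<Longrightarrow>
      (\<Sum>k=1..n. yf K1 K2 abar (beta k)) = 0 \<Longrightarrow>
      (\<Sum>k=1..n. cf K1 K2 (beta k)) \<le> (\<Sum>k=1..n. cf K1 K2 (astar k))"
    using assms(9) unfolding feasible_def Gc tot by blast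
  have ex: "cf K1 K2 u + cf K1 K2 v \<le> cf K1 K2 (astar i) + cf K1 K2 (astar j)"
    if ij: "i \<in> {1..n}" "j \<in> {1..n}" "i \<noteq> j" and uv: "0 \<le> u" "u \<le> 1" "0 \<le> v" "v \<le> 1"
      and yy: "yf K1 K2 abar u + yf K1 K2 abar v = yf K1 K2 abar (astar i) + yf K1 K2 abar (astar j)"
    for i j u v
  proof -
    define beta where "beta = astar(i:=u, j:=v)"
    have b1: "\<forall>k\<in>{1..n}. 0 \<le> beta k \<and> beta k \<le> 1" unfolding beta_def using rng uv by auto
    have "(\<Sum>k=1..n. yf K1 K2 abar (beta k)) = (\<Sum>k=1..n. yf K1 K2 abar (astar k))
        - yf K1 K2 abar (astar i) - yf K1 K2 abar (astar j) + yf K1 K2 abar u + yf K1 K2 abar v"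
      unfolding beta_def by (rule sum_upd2) (use ij in auto)
    hence b2: "(\<Sum>k=1..n. yf K1 K2 abar (beta k)) = 0" using G0 yy by simp
    have "(\<Sum>k=1..n. cf K1 K2 (beta k)) = (\<Sum>k=1..n. cf K1 K2 (astar k))
        - cf K1 K2 (astar i) - cf K1 K2 (astar j) + cf K1 K2 u + cf K1 K2 v"
      unfolding beta_def by (rule sum_upd2) (use ij in auto)
    thus ?thesis using opt[OF b1 b2] by simp
  qed
  have cont: "continuous_on {0..1} (yf K1 K2 abar)" using y_cont[OF K2p K21] .
  have nointer: False
    if ij: "i \<in> {1..n}" "j \<in> {1..n}" "i < j" and ai: "0 < astar i" "astar i < 1"
      and aj: "0 < astar j" "astar j < 1" for i j
  proof -
    define a where "a = astar i"
    define b where "b = astar j"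
    have ba: "b \<le> a" unfolding a_def b_def using assms(10) ij by auto
    have a01: "0 < a" "a < 1" and b01: "0 < b" "b < 1" using ai aj a_def b_def by auto
    define T where "T = yf K1 K2 abar a + yf K1 K2 abar b"
    let ?y = "yf K1 K2 abar" and ?c = "cf K1 K2" and ?S = "Sl K1 K2 abar"
    show False
    proof (cases "?y 0 \<le> T - ?y 1")
      case True
      have "T - ?y 1 \<le> ?y 1"
        using y_le[OF K2p K21 A0 A1, of a 1] y_le[OF K2p K21 A0 A1, of b 1] a01 b01
          y_le[OF K2p K21 A0 A1, of 0 1] unfolding T_def by linarith
      then obtain b' where b': "0 \<le> b'" "b' \<le> 1" "?y b' = T - ?y 1"
        using IVT'[of "?y" 0 "T - ?y 1" 1] True cont by auto
      have ya: "?y a < ?y 1" using y_mono[OF K2p K21 A0 A1, of a 1] a01 by simp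
      have bb: "b' < b"
      proof (rule ccontr)
        assume "\<not> b' < b"
        hence "?y b \<le> ?y b'" using y_le[OF K2p K21 A0 A1, of b b'] b' b01 by simp
        thus False using ya b' unfolding T_def by simp
      qed
      define \<Delta> where "\<Delta> = ?y 1 - ?y a"
      have D1: "?y b - ?y b' = \<Delta>" using b' unfolding \<Delta>_def T_def by simp
      have Dp: "\<Delta> > 0" using ya unfolding \<Delta>_def by simp
      have c1: "?c 1 - ?c a = ?S a 1 * \<Delta>" unfolding \<Delta>_def
        by (rule c_diff) (use K2p K21 A0 A1 a01 in auto)
      have c2: "?c b - ?c b' = ?S b' b * \<Delta>" unfolding D1[symmetric]
        by (rule c_diff) (use K2p K21 A0 A1 b01 b' in auto)
      have s1: "?S b b' < ?S b a"
        by (rule Sl_mono) (use K2p K21 A0 A1 b01 b' bb ba a01 in auto)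
      have s2: "?S a b < ?S a 1"
        by (rule Sl_mono) (use K2p K21 A0 A1 b01 a01 in auto)
      have "?S b' b < ?S a 1" using s1 s2 Sl_sym[of K1 K2 abar b b'] Sl_sym[of K1 K2 abar b a] by simp
      hence "?S b' b * \<Delta> < ?S a 1 * \<Delta>" using Dp by simp
      hence gt: "?c a + ?c b < ?c 1 + ?c b'" using c1 c2 by simp
      have "?c 1 + ?c b' \<le> ?c (astar i) + ?c (astar j)"
        by (rule ex[OF ij(1,2)]) (use ij b' in \<open>auto simp: T_def a_def b_def\<close>)
      thus False using gt a_def b_def by simp
    next
      case False
      have "?y 0 \<le> T - ?y 0"
        using y_le[OF K2p K21 A0 A1, of 0 a] y_le[OF K2p K21 A0 A1, of 0 b] a01 b01
        unfolding T_def by linarith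
      moreover have "T - ?y 0 \<le> ?y 1" using False by linarith
      ultimately obtain a' where a': "0 \<le> a'" "a' \<le> 1" "?y a' = T - ?y 0"
        using IVT'[of "?y" 0 "T - ?y 0" 1] cont by auto
      have yb: "?y 0 < ?y b" using y_mono[OF K2p K21 A0 A1, of 0 b] b01 by simp
      have aa: "a < a'"
      proof (rule ccontr)
        assume "\<not> a < a'"
        hence "?y a' \<le> ?y a" using y_le[OF K2p K21 A0 A1, of a' a] a' a01 by simp
        thus False using yb a' unfolding T_def by simp
      qed
      define \<Delta> where "\<Delta> = ?y b - ?y 0"
      have D1: "?y a' - ?y a = \<Delta>" using a' unfolding \<Delta>_def T_def by simp
      have Dp: "\<Delta> > 0" using yb unfolding \<Delta>_def by simp
      have c1: "?c a' - ?c a = ?S a a' * \<Delta>" unfolding D1[symmetric]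
        by (rule c_diff) (use K2p K21 A0 A1 a01 a' in auto)
      have c2: "?c b - ?c 0 = ?S 0 b * \<Delta>" unfolding \<Delta>_def
        by (rule c_diff) (use K2p K21 A0 A1 b01 in auto)
      have s1: "?S b 0 < ?S b a"
        by (rule Sl_mono) (use K2p K21 A0 A1 b01 a01 in auto)
      have s2: "?S a b < ?S a a'"
        by (rule Sl_mono) (use K2p K21 A0 A1 b01 a01 a' aa ba in auto)
      have "?S 0 b < ?S a a'" using s1 s2 Sl_sym[of K1 K2 abar b 0] Sl_sym[of K1 K2 abar b a] by simp
      hence "?S 0 b * \<Delta> < ?S a a' * \<Delta>" using Dp by simp
      hence gt: "?c a + ?c b < ?c a' + ?c 0" using c1 c2 by simp
      have "?c a' + ?c 0 \<le> ?c (astar i) + ?c (astar j)"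
        by (rule ex[OF ij(1,2)]) (use ij a' in \<open>auto simp: T_def a_def b_def\<close>)
      thus False using gt a_def b_def by simp
    qed
  qed
  have nointer2: False
    if ij: "i \<in> {1..n}" "j \<in> {1..n}" "i \<noteq> j" and ai: "0 < astar i" "astar i < 1"
      and aj: "0 < astar j" "astar j < 1" for i j
  proof (cases "i < j")
    case True show False using nointer[OF ij(1,2) True ai aj] by simp
  next
    case False hence "j < i" using ij(3) by simp
    thus False using nointer[OF ij(2,1) _ aj ai] by simp
  qed
  define y0 where "y0 = yf K1 K2 abar 0"
  define y1 where "y1 = yf K1 K2 abar 1"
  have y01: "y0 < y1" unfolding y0_def y1_def using y_mono[OF K2p K21 A0 A1, of 0 1] by simp
  define w where "w k = (yf K1 K2 abar (astar k) - y0) / (y1 - y0)" for k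
  define Ones where "Ones = {k\<in>{1..n}. astar k = 1}"
  define Rest where "Rest = {1..n} - Ones"
  have sumw: "(\<Sum>k=1..n. w k) = - real n * y0 / (y1 - y0)"
  proof -
    have "(\<Sum>k=1..n. w k) = (\<Sum>k=1..n. yf K1 K2 abar (astar k) - y0) / (y1 - y0)"
      unfolding w_def by (simp add: sum_divide_distrib)
    also have "\<dots> = - real n * y0 / (y1 - y0)" by (simp only: sum_subtractf G0 sum_constant card_atLeastAtMost) simp
    finally show ?thesis .
  qed
  have Kval: "- real n * y0 / (y1 - y0) =
      abar * real n * (k1 d L h - k2 d h hb) / (k1 d L h - abar * k2 d h hb)"
  proof -
    have e1: "K1 - K2 > 0" using K21 by simp
    have e2: "K1 - abar * K2 > 0" using K21 K2p A1 A0
      by (smt (verit) mult_left_le_one_le)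
    have K1p: "K1 > 0" using K2p K21 by simp
    have y0v: "y0 = - abar / K1" unfolding y0_def yf_def cf_def by simp
    have y1v: "y1 = (1 - abar) / (K1 - K2)" unfolding y1_def yf_def cf_def by simp
    have dv: "y1 - y0 = (K1 - abar*K2) / (K1*(K1-K2))" unfolding y0v y1v using e1 K1p
      by (simp add: field_simps)
    have "- real n * y0 / (y1 - y0) = - real n * (- abar / K1) / ((K1 - abar*K2) / (K1*(K1-K2)))"
      by (simp only: dv) (simp only: y0v)
    also have "\<dots> = abar * real n * (K1 - K2) / (K1 - abar * K2)"
      using e1 e2 K1p by (simp add: field_simps)
    finally show ?thesis unfolding K1_def K2_def .
  qed
  have fin: "finite {1..n::nat}" by simp
  have split: "(\<Sum>k=1..n. w k) = real (card Ones) + (\<Sum>k\<in>Rest. w k)"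
  proof -
    have "Ones \<subseteq> {1..n}" unfolding Ones_def by auto
    hence "(\<Sum>k=1..n. w k) = (\<Sum>k\<in>Rest. w k) + (\<Sum>k\<in>Ones. w k)"
      unfolding Rest_def using sum.subset_diff fin by blast
    moreover have "(\<Sum>k\<in>Ones. w k) = (\<Sum>k\<in>Ones. 1)"
      by (rule sum.cong) (use y01 in \<open>auto simp: Ones_def w_def y1_def\<close>)
    ultimately show ?thesis by simp
  qed
  have wge: "w k \<ge> 0" if "k \<in> Rest" for k
  proof -
    have "y0 \<le> yf K1 K2 abar (astar k)" unfolding y0_def
      using y_le[OF K2p K21 A0 A1, of 0 "astar k"] rng that Rest_def by auto
    thus ?thesis unfolding w_def using y01 by simp
  qed
  have wlt: "w k < 1" if "k \<in> Rest" for k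
  proof -
    have "astar k < 1" using rng that unfolding Rest_def Ones_def by force
    hence "yf K1 K2 abar (astar k) < y1" unfolding y1_def
      using y_mono[OF K2p K21 A0 A1, of "astar k" 1] rng that Rest_def by auto
    thus ?thesis unfolding w_def using y01 by simp
  qed
  have w0: "w k = 0" if "k \<in> Rest" "\<not> 0 < astar k" for k
  proof -
    have "astar k = 0" using rng that unfolding Rest_def by force
    thus ?thesis unfolding w_def y0_def by simp
  qed
  have finR: "finite Rest" unfolding Rest_def by simp
  have rbound: "0 \<le> (\<Sum>k\<in>Rest. w k) \<and> (\<Sum>k\<in>Rest. w k) < 1"
  proof (cases "\<exists>k0\<in>Rest. 0 < astar k0")
    case True
    then obtain k0 where k0: "k0 \<in> Rest" "0 < astar k0" by blast
    have k0lt: "astar k0 < 1" using rng k0 unfolding Rest_def Ones_def by force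
    have "(\<Sum>k\<in>Rest - {k0}. w k) = 0"
    proof (rule sum.neutral, rule ballI)
      fix k assume k: "k \<in> Rest - {k0}"
      have "\<not> 0 < astar k"
      proof
        assume pos: "0 < astar k"
        have "astar k < 1" using rng k unfolding Rest_def Ones_def by force
        thus False using nointer2[of k0 k] k k0 k0lt pos unfolding Rest_def by auto
      qed
      thus "w k = 0" using w0 k by auto
    qed
    hence "(\<Sum>k\<in>Rest. w k) = w k0" using sum.remove[OF finR k0(1), of w] by simp
    thus ?thesis using wge[OF k0(1)] wlt[OF k0(1)] by simp
  next
    case False
    hence "(\<Sum>k\<in>Rest. w k) = 0" using w0 by (intro sum.neutral) auto
    thus ?thesis by simp
  qed
  have nf: "num_full n astar = card Ones"
  proof (cases "Ones = {}")
    case True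
    hence "\<not> (\<exists>i\<in>{1..n}. astar i = 1)" unfolding Ones_def by auto
    thus ?thesis unfolding num_full_def using True by simp
  next
    case False
    hence ex1: "\<exists>i\<in>{1..n}. astar i = 1" unfolding Ones_def by auto
    define M where "M = Max Ones"
    have finO: "finite Ones" unfolding Ones_def by simp
    have MO: "M \<in> Ones" unfolding M_def using Max_in[OF finO False] .
    have "Ones = {1..M}"
    proof
      show "Ones \<subseteq> {1..M}" unfolding M_def using finO
        by (auto simp: Ones_def)
    next
      show "{1..M} \<subseteq> Ones"
      proof
        fix k assume k: "k \<in> {1..M}"
        have Mn: "M \<le> n" "astar M = 1" using MO unfolding Ones_def by auto
        hence "astar M \<le> astar k" using assms(10)[rule_format, of k M] k by auto
        moreover have "astar k \<le> 1" using rng k Mn by auto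
        ultimately show "k \<in> Ones" using Mn k unfolding Ones_def by auto
      qed
    qed
    hence "card Ones = M" by simp
    thus ?thesis unfolding num_full_def using ex1 M_def Ones_def by simp
  qed
  have "abar * real n * (k1 d L h - k2 d h hb) / (k1 d L h - abar * k2 d h hb)
      = real (card Ones) + (\<Sum>k\<in>Rest. w k)" using Kval sumw split by simp
  thus ?thesis unfolding nf using rbound by (simp add: floor_eq_iff)
qed

end
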